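(* Let $I$ be an open interval and let $a_1,a_2,a_3\in I$ be pairwise distinct. Then for all $f\in\mathscr{C}^3(I)$ and $x\in I$, \[ \begin{aligned} f(x)&=\bigg(f(a_1)+\int_{a_1}^x(f'''-f')(t)\big(\cosh(a_1-t)-1\big)dt\bigg)\frac{\cosh\big(x-\frac{a_2+a_3}{2}\big)-\cosh\big(\frac{a_2-a_3}{2}\big)}{\cosh\big(a_1-\frac{a_2+a_3}{2}\big)-\cosh\big(\frac{a_2-a_3}{2}\big)}\\ &\quad+\bigg(f(a_2)+\int_{a_2}^x(f'''-f')(t)\big(\cosh(a_2-t)-1\big)dt\bigg)\frac{\cosh\big(x-\frac{a_1+a_3}{2}\big)-\cosh\big(\frac{a_1-a_3}{2}\big)}{\cosh\big(a_2-\frac{a_1+a_3}{2}\big)-\cosh\big(\frac{a_1-a_3}{2}\big)}\\ &\quad+\bigg(f(a_3)+\int_{a_3}^x(f'''-f')(t)\big(\cosh(a_3-t)-1\big)dt\bigg)\frac{\cosh\big(x-\frac{a_1+a_2}{2}\big)-\cosh\big(\frac{a_1-a_2}{2}\big)}{\cosh\big(a_3-\frac{a_1+a_2}{2}\big)-\cosh\big(\frac{a_1-a_2}{2}\big)}. \end{aligned} \]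
   Context: $\mathscr{C}^3(I)$ denotes the space of three times continuously differentiable complex-valued functions on $I$. *)

theory Defs
  imports "HOL-Analysis.Analysis"
begin

definition oint :: "real \<Rightarrow> real \<Rightarrow> (real \<Rightarrow> complex) \<Rightarrow> complex" where
  "oint a b g = (if a \<le> b then integral {a..b} g else - integral {b..a} g)"

end

theory Submission
  imports Defs
begin

lemma Gderiv:
  fixes f f1 f2 f3 :: "real \<Rightarrow> complex" and a t :: real
  assumes "(f has_vector_derivative f1 t) (at t)" "(f1 has_vector_derivative f2 t) (at t)"
    "(f2 has_vector_derivative f3 t) (at t)"
  shows "((\<lambda>t. f t + f2 t * complex_of_real (cosh (a - t) - 1) + f1 t * complex_of_real (sinh (a - t)))
     has_vector_derivative ((f3 t - f1 t) * complex_of_real (cosh (a - t) - 1))) (at t)"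
proof -
  have c: "((\<lambda>t. complex_of_real (cosh (a - t) - 1)) has_vector_derivative complex_of_real (- sinh (a - t))) (at t)"
    by (rule has_vector_derivative_of_real) (auto intro!: derivative_eq_intros)
  have s: "((\<lambda>t. complex_of_real (sinh (a - t))) has_vector_derivative complex_of_real (- cosh (a - t))) (at t)"
    by (rule has_vector_derivative_of_real) (auto intro!: derivative_eq_intros)
  have "((\<lambda>t. f t + f2 t * complex_of_real (cosh (a - t) - 1) + f1 t * complex_of_real (sinh (a - t)))
     has_vector_derivative (f1 t + (f2 t * complex_of_real (- sinh (a - t)) + f3 t * complex_of_real (cosh (a - t) - 1))
       + (f1 t * complex_of_real (- cosh (a - t)) + f2 t * complex_of_real (sinh (a - t))))) (at t)"
    by (intro has_vector_derivative_add has_vector_derivative_mult assms c s)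
  moreover have "f1 t + (f2 t * complex_of_real (- sinh (a - t)) + f3 t * complex_of_real (cosh (a - t) - 1))
       + (f1 t * complex_of_real (- cosh (a - t)) + f2 t * complex_of_real (sinh (a - t)))
     = (f3 t - f1 t) * complex_of_real (cosh (a - t) - 1)"
    by (simp add: algebra_simps)
  ultimately show ?thesis by simp
qed


lemma ids:
  fixes P Q R S :: real assumes "P \<noteq> Q" "P \<noteq> R" "Q \<noteq> R" "S > 0" and that: "P > 0" "Q > 0" "R > 0"
  shows "P * (S - Q) * (S - R) / (S * (P - Q) * (P - R)) + Q * (S - P) * (S - R) / (S * (Q - P) * (Q - R))
   + R * (S - P) * (S - Q) / (S * (R - P) * (R - Q)) = 1"
    "P * (S - Q) * (S - R) / (S * (P - Q) * (P - R)) * ((P/S + S/P)/2 - 1)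
     + Q * (S - P) * (S - R) / (S * (Q - P) * (Q - R)) * ((Q/S + S/Q)/2 - 1)
     + R * (S - P) * (S - Q) / (S * (R - P) * (R - Q)) * ((R/S + S/R)/2 - 1) = 0"
    "P * (S - Q) * (S - R) / (S * (P - Q) * (P - R)) * ((P/S - S/P)/2)
     + Q * (S - P) * (S - R) / (S * (Q - P) * (Q - R)) * ((Q/S - S/Q)/2)
     + R * (S - P) * (S - Q) / (S * (R - P) * (R - Q)) * ((R/S - S/R)/2) = 0"
proof -
  have n: "P - Q \<noteq> 0" "P - R \<noteq> 0" "Q - R \<noteq> 0" "Q - P \<noteq> 0" "R - P \<noteq> 0" "R - Q \<noteq> 0" "S \<noteq> 0"
    "P \<noteq> 0" "Q \<noteq> 0" "R \<noteq> 0" using assms that by auto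
  show "P * (S - Q) * (S - R) / (S * (P - Q) * (P - R)) + Q * (S - P) * (S - R) / (S * (Q - P) * (Q - R))
   + R * (S - P) * (S - Q) / (S * (R - P) * (R - Q)) = 1" using n
    by (simp add: divide_simps) (simp add: algebra_simps)
  show "P * (S - Q) * (S - R) / (S * (P - Q) * (P - R)) * ((P/S + S/P)/2 - 1)
     + Q * (S - P) * (S - R) / (S * (Q - P) * (Q - R)) * ((Q/S + S/Q)/2 - 1)
     + R * (S - P) * (S - Q) / (S * (R - P) * (R - Q)) * ((R/S + S/R)/2 - 1) = 0" using n
    by (simp add: divide_simps) (simp add: algebra_simps)
  show "P * (S - Q) * (S - R) / (S * (P - Q) * (P - R)) * ((P/S - S/P)/2)
     + Q * (S - P) * (S - R) / (S * (Q - P) * (Q - R)) * ((Q/S - S/Q)/2)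
     + R * (S - P) * (S - Q) / (S * (R - P) * (R - Q)) * ((R/S - S/R)/2) = 0" using n
    by (simp add: divide_simps) (simp add: algebra_simps)
qed

lemma Lform:
  fixes a b c x :: real assumes "a \<noteq> b" "a \<noteq> c"
  shows "(cosh (x - (b + c) / 2) - cosh ((b - c) / 2)) / (cosh (a - (b + c) / 2) - cosh ((b - c) / 2))
    = exp a * (exp x - exp b) * (exp x - exp c) / (exp x * (exp a - exp b) * (exp a - exp c))"
proof -
  define s p q r where "s = exp (x/2)" "p = exp (a/2)" "q = exp (b/2)" "r = exp (c/2)"
  have pos: "s > 0" "p > 0" "q > 0" "r > 0" using s_p_q_r_def by auto
  have e: "exp x = s^2" "exp a = p^2" "exp b = q^2" "exp c = r^2"
    using s_p_q_r_def by (auto simp: power2_eq_square exp_add[symmetric])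
  have h1: "\<And>u v w::real. exp (u - (v + w)/2) = exp u / (exp (v/2) * exp (w/2))"
    by (simp add: exp_diff exp_add[symmetric] add_divide_distrib)
  have h2: "\<And>v w::real. exp ((v - w)/2) = exp (v/2) / exp (w/2)"
    by (simp add: exp_diff[symmetric] diff_divide_distrib)
  have h3: "\<And>v w::real. exp (-((v - w)/2)) = exp (w/2) / exp (v/2)"
    by (simp add: exp_diff[symmetric] diff_divide_distrib)
  have h4: "\<And>u v w::real. exp (-(u - (v + w)/2)) = (exp (v/2) * exp (w/2)) / exp u"
    by (simp add: exp_diff exp_add[symmetric] add_divide_distrib)
  have pq: "p^2 \<noteq> q^2" "p^2 \<noteq> r^2" using assms e exp_inj_iff by metis+
  have pq': "p^2 - q^2 \<noteq> 0" "p^2 - r^2 \<noteq> 0" using pq by auto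
  have d: "p^4 + q^2*r^2 - p^2*q^2 - p^2*r^2 \<noteq> 0"
  proof -
    have "p^4 + q^2*r^2 - p^2*q^2 - p^2*r^2 = (p^2-q^2)*(p^2-r^2)" by algebra
    thus ?thesis using pq' by simp
  qed
  have d': "p * p * (p * p) + q * q * (r * r) - (p * p * (q * q) + p * p * (r * r)) \<noteq> 0"
    using d by (simp add: power2_eq_square power4_eq_xxxx algebra_simps)
  have pq'': "p * p - q * q \<noteq> 0" "p * p - r * r \<noteq> 0" using pq' by (simp_all add: power2_eq_square)
  show ?thesis
    unfolding cosh_def h1 h2 h3 h4 e s_p_q_r_def[symmetric]
    using pos pq'' d'
    by (simp add: divide_simps power2_eq_square) (simp add: algebra_simps)
qed

theorem mainTheorem11:
  fixes I :: "real set" and a1 a2 a3 x :: real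
    and f f1 f2 f3 :: "real \<Rightarrow> complex"
  assumes I_open: "open I" and I_int: "is_interval I"
    and a_in: "a1 \<in> I" "a2 \<in> I" "a3 \<in> I"
    and a_dist: "a1 \<noteq> a2" "a1 \<noteq> a3" "a2 \<noteq> a3"
    and d1: "\<And>t. t \<in> I \<Longrightarrow> (f has_vector_derivative f1 t) (at t)"
    and d2: "\<And>t. t \<in> I \<Longrightarrow> (f1 has_vector_derivative f2 t) (at t)"
    and d3: "\<And>t. t \<in> I \<Longrightarrow> (f2 has_vector_derivative f3 t) (at t)"
    and c3: "continuous_on I f3"
    and x_in: "x \<in> I"
  shows "f x =
      (f a1 + oint a1 x (\<lambda>t. (f3 t - f1 t) * complex_of_real (cosh (a1 - t) - 1)))
        * complex_of_real ((cosh (x - (a2 + a3) / 2) - cosh ((a2 - a3) / 2))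
                         / (cosh (a1 - (a2 + a3) / 2) - cosh ((a2 - a3) / 2)))
    + (f a2 + oint a2 x (\<lambda>t. (f3 t - f1 t) * complex_of_real (cosh (a2 - t) - 1)))
        * complex_of_real ((cosh (x - (a1 + a3) / 2) - cosh ((a1 - a3) / 2))
                         / (cosh (a2 - (a1 + a3) / 2) - cosh ((a1 - a3) / 2)))
    + (f a3 + oint a3 x (\<lambda>t. (f3 t - f1 t) * complex_of_real (cosh (a3 - t) - 1)))
        * complex_of_real ((cosh (x - (a1 + a2) / 2) - cosh ((a1 - a2) / 2))
                         / (cosh (a3 - (a1 + a2) / 2) - cosh ((a1 - a2) / 2)))"
proof -
  define G where "G a t = f t + f2 t * complex_of_real (cosh (a - t) - 1) + f1 t * complex_of_real (sinh (a - t))" for a t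
  have oi: "oint a x (\<lambda>t. (f3 t - f1 t) * complex_of_real (cosh (a - t) - 1)) = G a x - f a"
    if aI: "a \<in> I" for a
  proof -
    have der: "((G a) has_vector_derivative ((f3 t - f1 t) * complex_of_real (cosh (a - t) - 1))) (at t)"
      if "t \<in> I" for t
    proof -
      have Geq: "G a = (\<lambda>t. f t + f2 t * complex_of_real (cosh (a - t) - 1) + f1 t * complex_of_real (sinh (a - t)))"
        by (rule ext) (simp only: G_def)
      show ?thesis unfolding Geq using Gderiv[of f f1 t f2 f3 a] d1[OF that] d2[OF that] d3[OF that] by blast
    qed
    have Ga: "G a a = f a" by (simp add: G_def)
    have seg: "{min a x..max a x} \<subseteq> I"
      using I_int aI x_in by (metis is_interval_1 atLeastAtMost_iff max_def min_def subsetI)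
    show ?thesis
    proof (cases "a \<le> x")
      case True
      have "((\<lambda>t. (f3 t - f1 t) * complex_of_real (cosh (a - t) - 1)) has_integral (G a x - G a a)) {a..x}"
      proof (rule fundamental_theorem_of_calculus)
        show "a \<le> x" using True by simp
        fix t assume "t \<in> {a..x}"
        hence "t \<in> I" using seg True by (auto simp: min_def max_def)
        thus "(G a has_vector_derivative (f3 t - f1 t) * complex_of_real (cosh (a - t) - 1)) (at t within {a..x})"
          by (rule has_vector_derivative_at_within[OF der])
      qed
      thus ?thesis using True Ga by (simp add: oint_def integral_unique)
    next
      case False
      have "((\<lambda>t. (f3 t - f1 t) * complex_of_real (cosh (a - t) - 1)) has_integral (G a a - G a x)) {x..a}"
      proof (rule fundamental_theorem_of_calculus)
        show "x \<le> a" using False by simp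
        fix t assume "t \<in> {x..a}"
        hence "t \<in> I" using seg False by (auto simp: min_def max_def)
        thus "(G a has_vector_derivative (f3 t - f1 t) * complex_of_real (cosh (a - t) - 1)) (at t within {x..a})"
          by (rule has_vector_derivative_at_within[OF der])
      qed
      thus ?thesis using False Ga by (simp add: oint_def integral_unique)
    qed
  qed
  define S P Q R where "S = exp x" "P = exp a1" "Q = exp a2" "R = exp a3"
  have pos: "P > 0" "Q > 0" "R > 0" "S > 0" using S_P_Q_R_def by auto
  have dist: "P \<noteq> Q" "P \<noteq> R" "Q \<noteq> R" using a_dist S_P_Q_R_def by auto
  have L1: "(cosh (x - (a2 + a3) / 2) - cosh ((a2 - a3) / 2)) / (cosh (a1 - (a2 + a3) / 2) - cosh ((a2 - a3) / 2))
      = P * (S - Q) * (S - R) / (S * (P - Q) * (P - R))"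
    using Lform[OF a_dist(1,2)] S_P_Q_R_def by simp
  have L2: "(cosh (x - (a1 + a3) / 2) - cosh ((a1 - a3) / 2)) / (cosh (a2 - (a1 + a3) / 2) - cosh ((a1 - a3) / 2))
      = Q * (S - P) * (S - R) / (S * (Q - P) * (Q - R))"
    using Lform[of a2 a1 a3] a_dist S_P_Q_R_def by simp
  have L3: "(cosh (x - (a1 + a2) / 2) - cosh ((a1 - a2) / 2)) / (cosh (a3 - (a1 + a2) / 2) - cosh ((a1 - a2) / 2))
      = R * (S - P) * (S - Q) / (S * (R - P) * (R - Q))"
    using Lform[of a3 a1 a2] a_dist S_P_Q_R_def by simp
  have ch: "cosh (a - x) = (exp a / S + S / exp a) / 2" "sinh (a - x) = (exp a / S - S / exp a) / 2" for a
    by (simp_all add: cosh_def sinh_def exp_diff exp_minus S_P_Q_R_def field_simps)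
  define l1 l2 l3 where "l1 = P * (S - Q) * (S - R) / (S * (P - Q) * (P - R))"
    "l2 = Q * (S - P) * (S - R) / (S * (Q - P) * (Q - R))"
    "l3 = R * (S - P) * (S - Q) / (S * (R - P) * (R - Q))"
  define k1 k2 k3 where "k1 = (P/S + S/P)/2 - 1" "k2 = (Q/S + S/Q)/2 - 1" "k3 = (R/S + S/R)/2 - 1"
  define s1 s2 s3 where "s1 = (P/S - S/P)/2" "s2 = (Q/S - S/Q)/2" "s3 = (R/S - S/R)/2"
  have E: "l1 + l2 + l3 = 1" "l1 * k1 + l2 * k2 + l3 * k3 = 0" "l1 * s1 + l2 * s2 + l3 * s3 = 0"
    unfolding l1_l2_l3_def k1_k2_k3_def s1_s2_s3_def
    by (rule ids(1)[OF dist pos(4) pos(1-3)], rule ids(2)[OF dist pos(4) pos(1-3)],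
        rule ids(3)[OF dist pos(4) pos(1-3)])
  have ks: "k1 = cosh (a1 - x) - 1" "k2 = cosh (a2 - x) - 1" "k3 = cosh (a3 - x) - 1"
    "s1 = sinh (a1 - x)" "s2 = sinh (a2 - x)" "s3 = sinh (a3 - x)"
    unfolding k1_k2_k3_def s1_s2_s3_def ch S_P_Q_R_def by simp_all
  have Gs: "G a1 x = f x + f2 x * of_real k1 + f1 x * of_real s1"
    "G a2 x = f x + f2 x * of_real k2 + f1 x * of_real s2"
    "G a3 x = f x + f2 x * of_real k3 + f1 x * of_real s3"
    unfolding G_def ks by simp_all
  have "(G a1 x) * of_real l1 + (G a2 x) * of_real l2 + (G a3 x) * of_real l3
     = f x * of_real (l1 + l2 + l3) + f2 x * of_real (l1 * k1 + l2 * k2 + l3 * k3)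
       + f1 x * of_real (l1 * s1 + l2 * s2 + l3 * s3)"
    unfolding Gs of_real_add of_real_mult by (simp only: algebra_simps)
  also have "\<dots> = f x" using E by simp
  finally have fin: "(G a1 x) * of_real l1 + (G a2 x) * of_real l2 + (G a3 x) * of_real l3 = f x" .
  have cc: "\<And>u v::complex. u + (v - u) = v" by simp
  show ?thesis
    unfolding oi[OF a_in(1)] oi[OF a_in(2)] oi[OF a_in(3)] L1 L2 L3
    using fin[symmetric] unfolding l1_l2_l3_def by (simp only: cc)
qed

end
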